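(* Let $\mathcal{P}$ be the powerset monad (unit $x\mapsto\{x\}$, multiplication union), $\mathcal{V}=[0,1]_\oplus$ and $\mathit{ev}_{\mathcal{P}}=\sup\colon\mathcal{P}[0,1]\to[0,1]$ (with $\sup\emptyset=0$). For sets $X_1,X_2$ define $g_{X_1,X_2}\colon\mathcal{P}(X_1+X_2)\to\mathcal{P}X_1+\mathcal{P}X_2$ by $g_{X_1,X_2}(X')=X'\cap X_1$ (in the left summand) if $X'\cap X_1\neq\emptyset$, and $g_{X_1,X_2}(X')=X'$ (in the right summand, as then $X'\subseteq X_2$) otherwise. Then $g$ is a natural transformation that is compatible with the unit and the multiplication of $\mathcal{P}$ and is well-behaved with respect to $\sup$.
   Context: $[0,1]_\oplus$ is the quantale on $[0,1]$ with the reversed order ($a\sqsubseteq b$ iff $a\ge b$) and truncated addition $a\oplus b=\min(a+b,1)$; hence its top element is $\top=0$ and its bottom is $\bot=1$. For a monad $(T,\eta,\mu)$, a natural transformation $g\colon T((-)+(-))\Rightarrow T(-)+T(-)$ is compatible with the unit if $g_{Y_1,Y_2}\circ\eta_{Y_1+Y_2}=\eta_{Y_1}+\eta_{Y_2}$, and with the multiplication if $g_{Y_1,Y_2}\circ\mu_{Y_1+Y_2}=(\mu_{Y_1}+\mu_{Y_2})\circ g_{TY_1,TY_2}\circ Tg_{Y_1,Y_2}$, for all sets $Y_1,Y_2$. It is well-behaved with respect to $\mathit{ev}_T\colon T\mathcal{V}\to\mathcal{V}$ if for all sets $X_1,X_2$ and maps $f_i\colon X_i\to\mathcal{V}$: $\mathit{ev}_T\circ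 T[f_1,\top_{X_2}]=[\mathit{ev}_T\circ Tf_1,\top_{TX_2}]\circ g_{X_1,X_2}$, $\mathit{ev}_T\circ T[\bot_{X_1},f_2]=[\bot_{TX_1},\mathit{ev}_T\circ Tf_2]\circ g_{X_1,X_2}$, and $\mathit{ev}_T\circ T[\bot_{X_1},\top_{X_2}]=[\bot_{TX_1},\top_{TX_2}]\circ g_{X_1,X_2}$, where $\top_Z,\bot_Z$ are constant maps on $Z$ with values $\top,\bot$ of the quantale. *)

theory Defs
  imports Main "HOL.Real"
begin

text \<open>The quantale V = [0,1] with reversed order and truncated addition.
  Elements are represented as reals in {0..1}; the top element (w.r.t. the
  reversed order) is 0, the bottom element is 1.\<close>

definition topV :: real where "topV = 0"
definition botV :: real where "botV = 1"

definition etaP :: "'a \<Rightarrow> 'a set" where "etaP x = {x}"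
definition muP :: "'a set set \<Rightarrow> 'a set" where "muP XX = \<Union> XX"

definition evP :: "real set \<Rightarrow> real" where
  "evP A = (if A = {} then 0 else Sup A)"

definition gP :: "('a + 'b) set \<Rightarrow> 'a set + 'b set" where
  "gP X' = (if {x. Inl x \<in> X'} \<noteq> {} then Inl {x. Inl x \<in> X'}
            else Inr {y. Inr y \<in> X'})"

end

theory Submission
  imports Defs
begin

lemma inl_part_map: "{x. Inl x \<in> map_sum f1 f2 ` X'} = f1 ` {x. Inl x \<in> X'}"
proof
  show "{x. Inl x \<in> map_sum f1 f2 ` X'} \<subseteq> f1 ` {x. Inl x \<in> X'}"
  proof
    fix x assume "x \<in> {x. Inl x \<in> map_sum f1 f2 ` X'}"
    then obtain z where z: "z \<in> X'" "Inl x = map_sum f1 f2 z" by auto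
    then show "x \<in> f1 ` {x. Inl x \<in> X'}" by (cases z) auto
  qed
  show "f1 ` {x. Inl x \<in> X'} \<subseteq> {x. Inl x \<in> map_sum f1 f2 ` X'}"
    by (auto simp: image_iff) (metis map_sum.simps(1))
qed
lemma inr_part_map: "{x. Inr x \<in> map_sum f1 f2 ` X'} = f2 ` {x. Inr x \<in> X'}"
proof
  show "{x. Inr x \<in> map_sum f1 f2 ` X'} \<subseteq> f2 ` {x. Inr x \<in> X'}"
  proof
    fix x assume "x \<in> {x. Inr x \<in> map_sum f1 f2 ` X'}"
    then obtain z where z: "z \<in> X'" "Inr x = map_sum f1 f2 z" by auto
    then show "x \<in> f2 ` {x. Inr x \<in> X'}" by (cases z) auto
  qed
  show "f2 ` {x. Inr x \<in> X'} \<subseteq> {x. Inr x \<in> map_sum f1 f2 ` X'}"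
    by (auto simp: image_iff) (metis map_sum.simps(2))
qed

lemma nat_g: "gP (map_sum f1 f2 ` X') = map_sum (image f1) (image f2) (gP X')"
  unfolding gP_def inl_part_map inr_part_map by auto

lemma unit_g: "gP (etaP z) = map_sum etaP etaP z"
  by (cases z) (auto simp: gP_def etaP_def)

lemma mult_g: "gP (muP XX) = map_sum muP muP (gP (image gP XX))"
proof (cases "\<exists>X\<in>XX. \<exists>x. Inl x \<in> X")
  case True
  then obtain X0 x0 where X0: "X0 \<in> XX" "Inl x0 \<in> X0" by blast
  have A: "{A. Inl A \<in> gP ` XX} = {{x. Inl x \<in> X} | X. X \<in> XX \<and> (\<exists>x. Inl x \<in> X)}"
    by (auto simp: gP_def split: if_splits)
  have ne: "{A. Inl A \<in> gP ` XX} \<noteq> {}" using X0 unfolding A by blast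
  have "gP (image gP XX) = Inl {A. Inl A \<in> gP ` XX}" using ne by (simp add: gP_def)
  moreover have "gP (muP XX) = Inl {x. Inl x \<in> \<Union>XX}" using X0 by (auto simp: gP_def muP_def)
  moreover have "muP {A. Inl A \<in> gP ` XX} = {x. Inl x \<in> \<Union>XX}"
    unfolding A muP_def by blast
  ultimately show ?thesis by simp
next
  case False
  have A: "{A. Inl A \<in> gP ` XX} = {}" using False by (auto simp: gP_def split: if_splits)
  have B: "{B. Inr B \<in> gP ` XX} = {{y. Inr y \<in> X} | X. X \<in> XX}"
    using False by (auto simp: gP_def)
  have "gP (image gP XX) = Inr {B. Inr B \<in> gP ` XX}" using A by (simp add: gP_def)
  moreover have "gP (muP XX) = Inr {y. Inr y \<in> \<Union>XX}" using False by (auto simp: gP_def muP_def)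
  moreover have "muP {B. Inr B \<in> gP ` XX} = {y. Inr y \<in> \<Union>XX}"
    unfolding B muP_def by blast
  ultimately show ?thesis by simp
qed

lemma sup_eq:
  fixes S :: "real set"
  assumes "S \<noteq> {}" "\<forall>s\<in>S. s \<le> 1" "m \<in> S" "\<forall>s\<in>S. s \<le> m"
  shows "Sup S = m"
  using assms by (meson cSup_eq_maximum)

lemma wb1:
  assumes h1: "\<forall>x. f1 x \<in> {0..1::real}"
  shows "evP (case_sum f1 (\<lambda>_. topV) ` X') = case_sum (\<lambda>A. evP (f1 ` A)) (\<lambda>_. topV) (gP X')"
proof (cases "\<exists>x. Inl x \<in> X'")
  case True
  define S where "S = case_sum f1 (\<lambda>_. topV) ` X'"
  define T where "T = f1 ` {x. Inl x \<in> X'}"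
  have gp: "gP X' = Inl {x. Inl x \<in> X'}" using True by (auto simp: gP_def)
  have sub: "T \<subseteq> S" unfolding S_def T_def by (force simp: image_iff)
  have sub2: "S \<subseteq> T \<union> {0}" unfolding S_def T_def by (auto simp: topV_def split: sum.splits)
  have neT: "T \<noteq> {}" using True unfolding T_def by auto
  have neS: "S \<noteq> {}" using neT sub by blast
  have bT: "bdd_above T" using h1 unfolding T_def by (intro bdd_aboveI[of _ 1]) auto
  have bS: "bdd_above S" using h1 unfolding S_def by (intro bdd_aboveI[of _ 1]) (auto simp: topV_def split: sum.splits)
  obtain t where t: "t \<in> T" using neT by blast
  have "0 \<le> t" using t h1 unfolding T_def by auto
  also have "t \<le> Sup T" using t bT by (rule cSup_upper)
  finally have b0: "0 \<le> Sup T" .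
  have "Sup S = Sup T"
  proof (rule antisym)
    show "Sup S \<le> Sup T"
    proof (rule cSup_least[OF neS])
      fix s assume "s \<in> S"
      then have "s \<in> T \<or> s = 0" using sub2 by blast
      then show "s \<le> Sup T" using b0 bT cSup_upper by blast
    qed
    show "Sup T \<le> Sup S" using neT bS sub by (rule cSup_subset_mono)
  qed
  then have e: "evP S = evP T" using neT neS unfolding evP_def by (simp only: if_False)
  have "evP (case_sum f1 (\<lambda>_. topV) ` X') = evP S" by (simp only: S_def)
  also note e
  also have "evP T = case_sum (\<lambda>A. evP (f1 ` A)) (\<lambda>_. topV) (gP X')" by (simp only: gp T_def sum.case)
  finally show ?thesis .
next
  case False
  have gp: "gP X' = Inr {y. Inr y \<in> X'}" using False by (auto simp: gP_def)
  have "case_sum f1 (\<lambda>_. topV) ` X' \<subseteq> {0}" using False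
    by (auto simp: topV_def split: sum.splits)
  then have "case_sum f1 (\<lambda>_. topV) ` X' = {} \<or> case_sum f1 (\<lambda>_. topV) ` X' = {0}" by (rule subset_singletonD)
  then show ?thesis using gp by (auto simp: evP_def topV_def)
qed

lemma wb2:
  assumes h2: "\<forall>y. f2 y \<in> {0..1::real}"
  shows "evP (case_sum (\<lambda>_. botV) f2 ` X') = case_sum (\<lambda>_. botV) (\<lambda>B. evP (f2 ` B)) (gP X')"
proof (cases "\<exists>x. Inl x \<in> X'")
  case True
  let ?S = "case_sum (\<lambda>_. botV) f2 ` X'"
  have gp: "gP X' = Inl {x. Inl x \<in> X'}" using True by (auto simp: gP_def)
  have m: "1 \<in> ?S" using True by (force simp: image_iff botV_def)
  have le: "\<forall>s\<in>?S. s \<le> 1" using h2 by (auto simp: botV_def split: sum.splits)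
  have "Sup ?S = 1" using m le by (meson cSup_eq_maximum)
  then show ?thesis using gp m by (auto simp: evP_def botV_def)
next
  case False
  have gp: "gP X' = Inr {y. Inr y \<in> X'}" using False by (auto simp: gP_def)
  have "case_sum (\<lambda>_. botV) f2 ` X' = f2 ` {y. Inr y \<in> X'}"
    using False by (force simp: image_iff split: sum.splits)
  then show ?thesis using gp by simp
qed

lemma wb3:
  "evP (case_sum (\<lambda>_. botV) (\<lambda>_. topV) ` X') = case_sum (\<lambda>_. botV) (\<lambda>_. topV) (gP X')"
proof (cases "\<exists>x. Inl x \<in> X'")
  case True
  let ?S = "case_sum (\<lambda>_. botV) (\<lambda>_. topV) ` X'"
  have gp: "gP X' = Inl {x. Inl x \<in> X'}" using True by (auto simp: gP_def)
  have m: "(1::real) \<in> ?S" using True by (force simp: image_iff botV_def)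
  have le: "\<forall>s\<in>?S. s \<le> 1" by (auto simp: botV_def topV_def split: sum.splits)
  have "Sup ?S = 1" using m le by (meson cSup_eq_maximum)
  then show ?thesis using gp m by (auto simp: evP_def botV_def)
next
  case False
  have gp: "gP X' = Inr {y. Inr y \<in> X'}" using False by (auto simp: gP_def)
  have "case_sum (\<lambda>_. botV) (\<lambda>_. topV) ` X' \<subseteq> {0::real}" using False
    by (auto simp: topV_def split: sum.splits)
  then have "case_sum (\<lambda>_. botV) (\<lambda>_. topV) ` X' = {} \<or> case_sum (\<lambda>_. botV) (\<lambda>_. topV) ` X' = {0::real}" by (rule subset_singletonD)
  then show ?thesis using gp by (auto simp: evP_def topV_def)
qed


theorem mainTheorem12:
  shows
    \<comment> \<open>naturality\<close>
    "(\<forall>(f1 :: 'a \<Rightarrow> 'c) (f2 :: 'b \<Rightarrow> 'd) (X' :: ('a + 'b) set).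
        gP (map_sum f1 f2 ` X') = map_sum (image f1) (image f2) (gP X'))
   \<comment> \<open>compatibility with the unit\<close>
   \<and> (\<forall>z :: 'a + 'b. gP (etaP z) = map_sum etaP etaP z)
   \<comment> \<open>compatibility with the multiplication\<close>
   \<and> (\<forall>XX :: ('a + 'b) set set.
        gP (muP XX) = map_sum muP muP (gP (image gP XX)))
   \<comment> \<open>well-behavedness with respect to ev_P = sup\<close>
   \<and> (\<forall>(f1 :: 'a \<Rightarrow> real) (f2 :: 'b \<Rightarrow> real).
        (\<forall>x. f1 x \<in> {0..1}) \<longrightarrow> (\<forall>y. f2 y \<in> {0..1}) \<longrightarrow>
        (\<forall>X' :: ('a + 'b) set.
           evP (case_sum f1 (\<lambda>_. topV) ` X')
             = case_sum (\<lambda>A. evP (f1 ` A)) (\<lambda>_. topV) (gP X')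
         \<and> evP (case_sum (\<lambda>_. botV) f2 ` X')
             = case_sum (\<lambda>_. botV) (\<lambda>B. evP (f2 ` B)) (gP X')
         \<and> evP (case_sum (\<lambda>_. botV) (\<lambda>_. topV) ` X')
             = case_sum (\<lambda>_. botV) (\<lambda>_. topV) (gP X')))"
  apply (intro conjI allI impI)
       apply (rule nat_g)
      apply (rule unit_g)
     apply (rule mult_g)
    apply (rule wb1, assumption)
   apply (rule wb2, assumption)
  apply (rule wb3)
  done

end
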